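(* Let $z\in\mathcal F^{\mathsf{BC}}_n$. Then $z\in\mathcal G^{\mathsf{BC}}_n$ if and only if there is an integer $0\le i\le n$ with $i\equiv n\pmod 2$ such that $-n\le z(n+1)<z(n+2)<\dots<z(n+i)\le n$ and $z(n+i+2j)=n+i+2j-1$ for each integer $j>0$ with $n+i+2j\le 2n$.
   Context: $W^{\mathsf{BC}}_{2n}$ is the group of permutations $w$ of $\{\pm1,\dots,\pm2n\}$ with $w(-i)=-w(i)$. $\mathcal F^{\mathsf{BC}}_n=\{z\in W^{\mathsf{BC}}_{2n}:z=z^{-1},\ |z(i)|\neq i\text{ for all }i\in[2n]\}$. An integer $i>0$ is a visible descent of $z$ if $z(i+1)<\min\{i,z(i)\}$ or $z(i)<-i$. $\mathcal G^{\mathsf{BC}}_n$ is the set of $z\in\mathcal F^{\mathsf{BC}}_n$ with no visible descent greater than $n$. *)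

theory Defs
  imports Main
begin

definition signed_set :: "nat \<Rightarrow> int set" where
  "signed_set m = {i. 1 \<le> \<bar>i\<bar> \<and> \<bar>i\<bar> \<le> int m}"

definition W_BC :: "nat \<Rightarrow> (int \<Rightarrow> int) set" where
  "W_BC m = {w. bij_betw w (signed_set m) (signed_set m)
               \<and> (\<forall>i\<in>signed_set m. w (-i) = - w i)
               \<and> (\<forall>i. i \<notin> signed_set m \<longrightarrow> w i = i)}"

definition F_BC :: "nat \<Rightarrow> (int \<Rightarrow> int) set" where
  "F_BC n = {z. z \<in> W_BC (2*n) \<and> z \<circ> z = id
               \<and> (\<forall>i. 1 \<le> i \<and> i \<le> int (2*n) \<longrightarrow> \<bar>z i\<bar> \<noteq> i)}"

definition visible_descent :: "(int \<Rightarrow> int) \<Rightarrow> int \<Rightarrow> bool" where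
  "visible_descent z i \<longleftrightarrow> 0 < i \<and> (z (i+1) < min i (z i) \<or> z i < - i)"

definition G_BC :: "nat \<Rightarrow> (int \<Rightarrow> int) set" where
  "G_BC n = {z. z \<in> F_BC n \<and> (\<forall>i. visible_descent z i \<longrightarrow> i \<le> int n)}"

end

theory Submission
  imports Defs
begin

lemma F_inv: assumes "z \<in> F_BC n" shows "z (z k) = k"
proof -
  have "z \<circ> z = id" using assms by (simp add: F_BC_def)
  then show ?thesis by (metis comp_apply id_apply)
qed

lemma F_out: assumes "z \<in> F_BC n" "\<not> (1 \<le> \<bar>k\<bar> \<and> \<bar>k\<bar> \<le> 2 * int n)" shows "z k = k"
  using assms by (auto simp: F_BC_def W_BC_def signed_set_def)

lemma F_neg: assumes "z \<in> F_BC n" shows "z (-k) = - z k"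
proof (cases "1 \<le> \<bar>k\<bar> \<and> \<bar>k\<bar> \<le> 2 * int n")
  case True then show ?thesis using assms by (auto simp: F_BC_def W_BC_def signed_set_def)
next
  case False
  then have "z k = k" "z (-k) = -k" using F_out[OF assms] by auto
  then show ?thesis by simp
qed

lemma F_range: assumes "z \<in> F_BC n" "1 \<le> \<bar>k\<bar>" "\<bar>k\<bar> \<le> 2 * int n"
  shows "1 \<le> \<bar>z k\<bar> \<and> \<bar>z k\<bar> \<le> 2 * int n"
proof -
  have "bij_betw z (signed_set (2*n)) (signed_set (2*n))" using assms(1) by (simp add: F_BC_def W_BC_def)
  then have "z k \<in> signed_set (2*n)" using assms(2,3) by (auto simp: signed_set_def dest: bij_betw_apply)
  then show ?thesis by (simp add: signed_set_def)
qed

lemma F_nofix: assumes "z \<in> F_BC n" "1 \<le> k" "k \<le> 2 * int n" shows "z k \<noteq> k \<and> z k \<noteq> -k"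
proof -
  have "\<bar>z k\<bar> \<noteq> k" using assms by (auto simp: F_BC_def)
  then show ?thesis using assms(2) by auto
qed

lemma block:
  assumes F: "z \<in> F_BC n"
    and nd: "\<And>t. int n < t \<Longrightarrow> t < 2*int n \<Longrightarrow> z (t+1) \<ge> min t (z t)"
  shows "\<And>m. int n \<le> m \<Longrightarrow> m \<le> 2*int n \<Longrightarrow> 2*int n - m = int d \<Longrightarrow>
     (\<forall>t. m < t \<and> t \<le> 2*int n \<longrightarrow> m < z t \<and> z t \<le> 2*int n) \<Longrightarrow>
     even d \<and> (\<forall>j>0. m+2*j \<le> 2*int n \<longrightarrow> z(m+2*j) = m+2*j-1)"
proof (induction d rule: less_induct)
  case (less d m)
  show ?case
  proof (cases "d = 0")
    case True then show ?thesis using less.prems by auto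
  next
    case d0: False
    show ?thesis
    proof (cases "d = 1")
      case True
      then have e: "m + 1 = 2 * int n" using less.prems by auto
      then have "z (m+1) = m+1" using less.prems(4) by force
      moreover have "z (m+1) \<noteq> m+1" using F_nofix[OF F, of "m+1"] less.prems e by auto
      ultimately show ?thesis by blast
    next
      case False
      with d0 have d2: "d \<ge> 2" by auto
      define a where "a = z (m+1)"
      have a1: "m < a" "a \<le> 2*int n" using less.prems(4) less.prems d2 unfolding a_def by auto
      have a2: "a \<noteq> m+1" using F_nofix[OF F, of "m+1"] less.prems d2 unfolding a_def by auto
      have za: "z a = m+1" using F_inv[OF F] a_def by simp
      have aeq: "a = m+2"
      proof (rule ccontr)
        assume "a \<noteq> m+2"
        then have ag: "a \<ge> m+3" using a1 a2 by auto
        define s where "s = a - 1"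
        have "z (s+1) \<ge> min s (z s)" using nd[of s] ag a1 less.prems unfolding s_def by auto
        then have "z s \<le> m+1" using za ag unfolding s_def by auto
        moreover have "m < z s" using less.prems(4) ag a1 unfolding s_def by auto
        ultimately have "z s = m+1" by auto
        then have "s = a" using F_inv[OF F, of s] a_def by simp
        then show False unfolding s_def by simp
      qed
      have zm2: "z (m+2) = m+1" using za aeq by simp
      have cl: "\<forall>t. m+2 < t \<and> t \<le> 2*int n \<longrightarrow> m+2 < z t \<and> z t \<le> 2*int n"
      proof (intro allI impI)
        fix t assume t: "m+2 < t \<and> t \<le> 2*int n"
        then have h: "m < z t \<and> z t \<le> 2*int n" using less.prems(4) by auto
        have "z t \<noteq> m+1" using F_inv[OF F, of t] a_def aeq t by auto
        moreover have "z t \<noteq> m+2" using F_inv[OF F, of t] zm2 t by auto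
        ultimately show "m+2 < z t \<and> z t \<le> 2*int n" using h by auto
      qed
      have IH: "even (d-2) \<and> (\<forall>j>0. m+2+2*j \<le> 2*int n \<longrightarrow> z(m+2+2*j) = m+2+2*j-1)"
        using less.IH[of "d-2" "m+2"] d2 less.prems cl by auto
      have ev: "even d" using IH d2 by (metis add_diff_inverse_nat even_add le_less_trans dvd_refl
            not_less one_less_numeral_iff semiring_norm(76))
      have "\<forall>j>0. m+2*j \<le> 2*int n \<longrightarrow> z(m+2*j) = m+2*j-1"
      proof (intro allI impI)
        fix j :: int assume j: "j > 0" "m+2*j \<le> 2*int n"
        show "z(m+2*j) = m+2*j-1"
        proof (cases "j = 1")
          case True then show ?thesis using zm2 by simp
        next
          case False
          have h: "j-1 > 0" "m+2+2*(j-1) \<le> 2*int n" using j False by auto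
          have "z(m+2+2*(j-1)) = m+2+2*(j-1)-1" using IH h by blast
          then show ?thesis by (simp add: algebra_simps)
        qed
      qed
      then show ?thesis using ev by blast
    qed
  qed
qed

theorem mainTheorem7:
  fixes n :: nat and z :: "int \<Rightarrow> int"
  assumes "z \<in> F_BC n"
  shows "z \<in> G_BC n \<longleftrightarrow>
    (\<exists>i::int. 0 \<le> i \<and> i \<le> int n \<and> i mod 2 = int n mod 2
       \<and> (\<forall>k. int n + 1 \<le> k \<and> k \<le> int n + i \<longrightarrow> - int n \<le> z k \<and> z k \<le> int n)
       \<and> (\<forall>k. int n + 1 \<le> k \<and> k < int n + i \<longrightarrow> z k < z (k+1))
       \<and> (\<forall>j::int. j > 0 \<and> int n + i + 2*j \<le> 2 * int n \<longrightarrow>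
             z (int n + i + 2*j) = int n + i + 2*j - 1))"
proof
  assume G: "z \<in> G_BC n"
  have ndv: "\<And>t. int n < t \<Longrightarrow> \<not> visible_descent z t" using G by (force simp: G_BC_def)
  have nd1: "\<And>t. int n < t \<Longrightarrow> z (t+1) \<ge> min t (z t)"
    using ndv by (simp add: visible_descent_def not_less min_le_iff_disj)
  have nd2: "\<And>t. int n < t \<Longrightarrow> z t \<ge> -t"
    using ndv by (simp add: visible_descent_def not_less)
  have inj: "\<And>a b. z a = z b \<Longrightarrow> a = b" using F_inv[OF assms] by metis
  have A: "\<And>t. int n < t \<Longrightarrow> z t > int n \<Longrightarrow> z (t+1) > int n"
  proof -
    fix t assume t: "int n < t" "z t > int n"
    then have "min t (z t) > int n" by simp
    then show "z (t+1) > int n" using nd1[OF t(1)] by linarith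
  qed
  have ex: "\<And>d. d \<le> n \<Longrightarrow> \<exists>m. int n \<le> m \<and> m \<le> int n + int d \<and> (\<forall>t. int n < t \<and> t \<le> m \<longrightarrow> z t \<le> int n)
      \<and> (\<forall>t. m < t \<and> t \<le> int n + int d \<longrightarrow> z t > int n)"
  proof -
    fix d show "d \<le> n \<Longrightarrow> \<exists>m. int n \<le> m \<and> m \<le> int n + int d \<and> (\<forall>t. int n < t \<and> t \<le> m \<longrightarrow> z t \<le> int n)
      \<and> (\<forall>t. m < t \<and> t \<le> int n + int d \<longrightarrow> z t > int n)"
    proof (induction d)
      case 0
      show ?case by (rule exI[of _ "int n"]) auto
    next
      case (Suc d)
      then obtain m where m: "int n \<le> m" "m \<le> int n + int d" "\<forall>t. int n < t \<and> t \<le> m \<longrightarrow> z t \<le> int n"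
        "\<forall>t. m < t \<and> t \<le> int n + int d \<longrightarrow> z t > int n" by auto
      show ?case
      proof (cases "z (int n + int d + 1) > int n")
        case True
        show ?thesis
        proof (rule exI[of _ m], intro conjI allI impI)
          fix t assume "m < t \<and> t \<le> int n + int (Suc d)"
          then show "z t > int n" using m True by (cases "t = int n + int d + 1") auto
        qed (use m in auto)
      next
        case False
        have "m = int n + int d"
        proof (rule ccontr)
          assume "m \<noteq> int n + int d"
          then have "z (int n + int d) > int n" "int n < int n + int d" using m by auto
          then show False using A False by blast
        qed
        show ?thesis
        proof (rule exI[of _ "int n + int d + 1"], intro conjI allI impI)
          fix t assume "int n < t \<and> t \<le> int n + int d + 1"
          then show "z t \<le> int n" using m False \<open>m = _\<close> by (cases "t = int n + int d + 1") auto
        qed auto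
      qed
    qed
  qed
  obtain m where m: "int n \<le> m" "m \<le> 2 * int n" "\<forall>t. int n < t \<and> t \<le> m \<longrightarrow> z t \<le> int n"
        "\<forall>t. m < t \<and> t \<le> 2 * int n \<longrightarrow> z t > int n" using ex[of n] by auto
  have rng: "\<And>t. int n < t \<Longrightarrow> t \<le> 2 * int n \<Longrightarrow> \<bar>z t\<bar> \<le> 2 * int n"
    using F_range[OF assms] by force
  have up: "\<forall>t. m < t \<and> t \<le> 2*int n \<longrightarrow> m < z t \<and> z t \<le> 2*int n"
  proof (intro allI impI)
    fix t assume t: "m < t \<and> t \<le> 2*int n"
    have zt: "z t > int n" using m t by auto
    have "z t \<le> 2 * int n" using rng[of t] t m by auto
    moreover have "m < z t"
    proof (rule ccontr)
      assume "\<not> m < z t"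
      then have "z (z t) \<le> int n" using m zt by auto
      then show False using F_inv[OF assms, of t] t m by auto
    qed
    ultimately show "m < z t \<and> z t \<le> 2*int n" by auto
  qed
  have nd1': "\<And>t. int n < t \<Longrightarrow> t < 2*int n \<Longrightarrow> z (t+1) \<ge> min t (z t)" using nd1 by blast
  have B: "even (nat (2*int n - m)) \<and> (\<forall>j>0. m+2*j \<le> 2*int n \<longrightarrow> z(m+2*j) = m+2*j-1)"
    using block[OF assms nd1', of m "nat (2*int n - m)"] m up by auto
  have low: "\<forall>k. int n + 1 \<le> k \<and> k \<le> m \<longrightarrow> - int n \<le> z k \<and> z k \<le> int n"
  proof (intro allI impI conjI)
    fix t assume t: "int n + 1 \<le> t \<and> t \<le> m"
    show "z t \<le> int n" using t m by auto
    show "- int n \<le> z t"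
    proof (rule ccontr)
      assume c: "\<not> - int n \<le> z t"
      define s where "s = - z t"
      have s1: "int n < s" "s \<le> 2 * int n" using c rng[of t] t m unfolding s_def by auto
      have "z (-s) = t" unfolding s_def using F_inv[OF assms, of t] by simp
      then have zs: "z s = -t" using F_neg[OF assms, of s] by simp
      have "s \<noteq> t" using F_nofix[OF assms, of t] t m unfolding s_def by auto
      then show False
      proof (cases "s < t")
        case True then show False using nd2[of s] s1 zs by auto
      next
        case False then show False using nd2[of t] t m \<open>s \<noteq> t\<close> unfolding s_def by auto
      qed
    qed
  qed
  have inc: "\<forall>k. int n + 1 \<le> k \<and> k < m \<longrightarrow> z k < z (k+1)"
  proof (intro allI impI)
    fix k assume k: "int n + 1 \<le> k \<and> k < m"
    have "z k \<le> int n" using low k by auto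
    then have "min k (z k) = z k" using k by auto
    then have "z (k+1) \<ge> z k" using nd1[of k] k by auto
    moreover have "z (k+1) \<noteq> z k" using inj[of "k+1" k] by auto
    ultimately show "z k < z (k+1)" by auto
  qed
  obtain c where c: "nat (2*int n - m) = 2*c" using B by blast
  have "2*int n - m = 2 * int c" using c m by linarith
  then have par: "(m - int n) mod 2 = int n mod 2" by presburger
  show "\<exists>i::int. 0 \<le> i \<and> i \<le> int n \<and> i mod 2 = int n mod 2
       \<and> (\<forall>k. int n + 1 \<le> k \<and> k \<le> int n + i \<longrightarrow> - int n \<le> z k \<and> z k \<le> int n)
       \<and> (\<forall>k. int n + 1 \<le> k \<and> k < int n + i \<longrightarrow> z k < z (k+1))
       \<and> (\<forall>j::int. j > 0 \<and> int n + i + 2*j \<le> 2 * int n \<longrightarrow>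
             z (int n + i + 2*j) = int n + i + 2*j - 1)"
    by (rule exI[of _ "m - int n"]) (use m par low inc B in auto)
next
  assume "\<exists>i::int. 0 \<le> i \<and> i \<le> int n \<and> i mod 2 = int n mod 2
       \<and> (\<forall>k. int n + 1 \<le> k \<and> k \<le> int n + i \<longrightarrow> - int n \<le> z k \<and> z k \<le> int n)
       \<and> (\<forall>k. int n + 1 \<le> k \<and> k < int n + i \<longrightarrow> z k < z (k+1))
       \<and> (\<forall>j::int. j > 0 \<and> int n + i + 2*j \<le> 2 * int n \<longrightarrow>
             z (int n + i + 2*j) = int n + i + 2*j - 1)"
  then obtain i where i: "0 \<le> i" "i \<le> int n" "i mod 2 = int n mod 2"
       "\<forall>k. int n + 1 \<le> k \<and> k \<le> int n + i \<longrightarrow> - int n \<le> z k \<and> z k \<le> int n"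
       "\<forall>k. int n + 1 \<le> k \<and> k < int n + i \<longrightarrow> z k < z (k+1)"
       "\<forall>j::int. j > 0 \<and> int n + i + 2*j \<le> 2 * int n \<longrightarrow> z (int n + i + 2*j) = int n + i + 2*j - 1"
    by blast
  define m where "m = int n + i"
  have upv: "\<And>t. m < t \<Longrightarrow> t \<le> 2 * int n \<Longrightarrow> z t \<ge> t - 1"
  proof -
    fix t assume t: "m < t" "t \<le> 2 * int n"
    show "z t \<ge> t - 1"
    proof (cases "even (t - m)")
      case True
      then obtain j where j: "t - m = 2 * j" by blast
      have tj: "t = int n + i + 2*j" using j m_def by simp
      have "j > 0" "int n + i + 2*j \<le> 2*int n" using tj t m_def by auto
      then have "z (int n + i + 2*j) = int n + i + 2*j - 1" using i(6) by blast
      then show ?thesis using tj by simp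
    next
      case False
      define j where "j = (t - m + 1) div 2"
      have j: "t - m = 2 * j - 1" using False unfolding j_def by presburger
      have "t \<noteq> 2 * int n" using False i(3) m_def by presburger
      have tj: "t + 1 = int n + i + 2*j" using j m_def by simp
      have "j > 0" "int n + i + 2*j \<le> 2*int n" using tj t m_def \<open>t \<noteq> 2 * int n\<close> by auto
      then have "z (int n + i + 2*j) = int n + i + 2*j - 1" using i(6) by blast
      then have "z (t+1) = t" using tj by simp
      then have "z t = t + 1" using F_inv[OF assms, of "t+1"] by simp
      then show ?thesis by simp
    qed
  qed
  show "z \<in> G_BC n"
    unfolding G_BC_def
  proof (intro CollectI conjI allI impI)
    show "z \<in> F_BC n" by (rule assms)
    fix t assume vd: "visible_descent z t"
    show "t \<le> int n"
    proof (rule ccontr)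
      assume "\<not> t \<le> int n"
      then have tn: "t > int n" by simp
      show False
      proof (cases "t \<le> 2 * int n")
        case False
        then have "z t = t" "z (t+1) = t+1" using F_out[OF assms] tn by auto
        then show False using vd tn by (simp add: visible_descent_def)
      next
        case True
        have a: "z t \<ge> -t"
        proof (cases "t \<le> m")
          case True
          then have "- int n \<le> z t" using i(4) tn m_def by auto
          then show ?thesis using tn by linarith
        next
          case False then show ?thesis using upv[of t] \<open>t \<le> 2 * int n\<close> tn by force
        qed
        have b: "z (t+1) \<ge> min t (z t)"
        proof (cases "t = 2 * int n")
          case True
          then have "z (t+1) = t+1" using F_out[OF assms] tn by auto
          then show ?thesis by simp
        next
          case False
          show ?thesis
          proof (cases "t < m")
            case True then have "z t < z (t+1)" using i(5) tn m_def by auto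
            then show ?thesis by simp
          next
            case False
            then have "z (t+1) \<ge> t" using upv[of "t+1"] \<open>t \<le> 2 * int n\<close> \<open>t \<noteq> 2 * int n\<close> by auto
            then show ?thesis by simp
          qed
        qed
        show False using vd a b by (simp add: visible_descent_def not_less min_le_iff_disj)
      qed
    qed
  qed
qed

end
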